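(* Let $\Bbbk$ be a field of characteristic $0$ and $X$ a set. Then $\mathrm{DiSJ}\langle X\rangle$ is the free dialgebra on $X$ in the class $\mathrm{HomDiSJ}$: it belongs to $\mathrm{HomDiSJ}$, and for every $J'\in\mathrm{HomDiSJ}$ every map $X\to J'$ extends to a homomorphism $\mathrm{DiSJ}\langle X\rangle\to J'$.
   Context: An associative dialgebra is a vector space with bilinear $\vdash,\dashv$ satisfying $(x\dashv y)\vdash z=(x\vdash y)\vdash z$, $x\dashv(y\vdash z)=x\dashv(y\dashv z)$, $(x\vdash y)\vdash z=x\vdash(y\vdash z)$, $(x\dashv y)\dashv z=x\dashv(y\dashv z)$, $(x\vdash y)\dashv z=x\vdash(y\dashv z)$; $\mathrm{DiAs}\langle X\rangle$ is the free associative dialgebra. $D^{(+)}$ is $D$ with $a\vdash_+b=\tfrac12(a\vdash b+b\dashv a)$, $a\dashv_+b=\tfrac12(a\dashv b+b\vdash a)$. $\mathrm{DiSJ}\langle X\rangle$ is the subdialgebra of $\mathrm{DiAs}\langle X\rangle^{(+)}$ generated by $X$. A special Jordan dialgebra is a subdialgebra of some $D^{(+)}$ with $D$ associative; $\mathrm{HomDiSJ}$ is the class of homomorphic images of special Jordan dialgebras. *)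

theory Defs
  imports Main "HOL.Vector_Spaces" "HOL-Library.Function_Algebras"
begin

text \<open>A vector space over the field 'k is a carrier V inside a type 'v carrying
  a module structure given by the scalar multiplication sc. The two products
  are dl (for x |- y) and dr (for x -| y).\<close>

definition subspc :: "('k::field \<Rightarrow> 'v::ab_group_add \<Rightarrow> 'v) \<Rightarrow> 'v set \<Rightarrow> bool" where
  "subspc sc V \<longleftrightarrow> 0 \<in> V \<and> (\<forall>x\<in>V. \<forall>y\<in>V. x + y \<in> V) \<and> (\<forall>a. \<forall>x\<in>V. sc a x \<in> V)"

definition dialg :: "('k::field \<Rightarrow> 'v::ab_group_add \<Rightarrow> 'v) \<Rightarrow> 'v set
    \<Rightarrow> ('v \<Rightarrow> 'v \<Rightarrow> 'v) \<Rightarrow> ('v \<Rightarrow> 'v \<Rightarrow> 'v) \<Rightarrow> bool" where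
  "dialg sc V dl dr \<longleftrightarrow> module sc \<and> subspc sc V \<and>
     (\<forall>x\<in>V. \<forall>y\<in>V. dl x y \<in> V \<and> dr x y \<in> V) \<and>
     (\<forall>x\<in>V. \<forall>y\<in>V. \<forall>z\<in>V.
        dl (x + y) z = dl x z + dl y z \<and> dl x (y + z) = dl x y + dl x z \<and>
        dr (x + y) z = dr x z + dr y z \<and> dr x (y + z) = dr x y + dr x z) \<and>
     (\<forall>a. \<forall>x\<in>V. \<forall>y\<in>V.
        dl (sc a x) y = sc a (dl x y) \<and> dl x (sc a y) = sc a (dl x y) \<and>
        dr (sc a x) y = sc a (dr x y) \<and> dr x (sc a y) = sc a (dr x y))"

definition assoc_dialg :: "('k::field \<Rightarrow> 'v::ab_group_add \<Rightarrow> 'v) \<Rightarrow> 'v set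
    \<Rightarrow> ('v \<Rightarrow> 'v \<Rightarrow> 'v) \<Rightarrow> ('v \<Rightarrow> 'v \<Rightarrow> 'v) \<Rightarrow> bool" where
  "assoc_dialg sc V dl dr \<longleftrightarrow> dialg sc V dl dr \<and>
     (\<forall>x\<in>V. \<forall>y\<in>V. \<forall>z\<in>V.
        dl (dr x y) z = dl (dl x y) z \<and>
        dr x (dl y z) = dr x (dr y z) \<and>
        dl (dl x y) z = dl x (dl y z) \<and>
        dr (dr x y) z = dr x (dr y z) \<and>
        dr (dl x y) z = dl x (dr y z))"

definition plus_dl :: "('k::field \<Rightarrow> 'v::ab_group_add \<Rightarrow> 'v)
    \<Rightarrow> ('v \<Rightarrow> 'v \<Rightarrow> 'v) \<Rightarrow> ('v \<Rightarrow> 'v \<Rightarrow> 'v) \<Rightarrow> 'v \<Rightarrow> 'v \<Rightarrow> 'v" where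
  "plus_dl sc dl dr a b = sc (inverse 2) (dl a b + dr b a)"

definition plus_dr :: "('k::field \<Rightarrow> 'v::ab_group_add \<Rightarrow> 'v)
    \<Rightarrow> ('v \<Rightarrow> 'v \<Rightarrow> 'v) \<Rightarrow> ('v \<Rightarrow> 'v \<Rightarrow> 'v) \<Rightarrow> 'v \<Rightarrow> 'v \<Rightarrow> 'v" where
  "plus_dr sc dl dr a b = sc (inverse 2) (dr a b + dl b a)"

definition subdialg :: "('k::field \<Rightarrow> 'v::ab_group_add \<Rightarrow> 'v) \<Rightarrow> 'v set
    \<Rightarrow> ('v \<Rightarrow> 'v \<Rightarrow> 'v) \<Rightarrow> ('v \<Rightarrow> 'v \<Rightarrow> 'v) \<Rightarrow> 'v set \<Rightarrow> bool" where
  "subdialg sc V dl dr S \<longleftrightarrow> S \<subseteq> V \<and> subspc sc S \<and>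
     (\<forall>x\<in>S. \<forall>y\<in>S. dl x y \<in> S \<and> dr x y \<in> S)"

definition gen_subdialg :: "('k::field \<Rightarrow> 'v::ab_group_add \<Rightarrow> 'v) \<Rightarrow> 'v set
    \<Rightarrow> ('v \<Rightarrow> 'v \<Rightarrow> 'v) \<Rightarrow> ('v \<Rightarrow> 'v \<Rightarrow> 'v) \<Rightarrow> 'v set \<Rightarrow> 'v set" where
  "gen_subdialg sc V dl dr A = \<Inter>{S. A \<subseteq> S \<and> subdialg sc V dl dr S}"

definition dialg_hom :: "('k::field \<Rightarrow> 'v::ab_group_add \<Rightarrow> 'v) \<Rightarrow> 'v set
    \<Rightarrow> ('v \<Rightarrow> 'v \<Rightarrow> 'v) \<Rightarrow> ('v \<Rightarrow> 'v \<Rightarrow> 'v)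
    \<Rightarrow> ('k \<Rightarrow> 'w::ab_group_add \<Rightarrow> 'w) \<Rightarrow> 'w set
    \<Rightarrow> ('w \<Rightarrow> 'w \<Rightarrow> 'w) \<Rightarrow> ('w \<Rightarrow> 'w \<Rightarrow> 'w) \<Rightarrow> ('v \<Rightarrow> 'w) \<Rightarrow> bool" where
  "dialg_hom sc1 V1 dl1 dr1 sc2 V2 dl2 dr2 f \<longleftrightarrow>
     f ` V1 \<subseteq> V2 \<and>
     (\<forall>x\<in>V1. \<forall>y\<in>V1. f (x + y) = f x + f y \<and>
        f (dl1 x y) = dl2 (f x) (f y) \<and> f (dr1 x y) = dr2 (f x) (f y)) \<and>
     (\<forall>a. \<forall>x\<in>V1. f (sc1 a x) = sc2 a (f x))"

text \<open>HomDiSJ: (sc,V,dl,dr) is a dialgebra which is the image of a surjective homomorphism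
  from a special Jordan dialgebra S, i.e. a subdialgebra S of D^(+) for an associative
  dialgebra D. The type of D is given by the itself-argument; membership in the class
  HomDiSJ means: this holds for SOME type 'd.\<close>

definition HomDiSJ_via :: "'d::ab_group_add itself \<Rightarrow> ('k::field \<Rightarrow> 'v::ab_group_add \<Rightarrow> 'v)
    \<Rightarrow> 'v set \<Rightarrow> ('v \<Rightarrow> 'v \<Rightarrow> 'v) \<Rightarrow> ('v \<Rightarrow> 'v \<Rightarrow> 'v) \<Rightarrow> bool" where
  "HomDiSJ_via _ sc V dl dr \<longleftrightarrow> dialg sc V dl dr \<and>
     (\<exists>(scD :: 'k \<Rightarrow> 'd \<Rightarrow> 'd) D dlD drD S f.
        assoc_dialg scD D dlD drD \<and>
        subdialg scD D (plus_dl scD dlD drD) (plus_dr scD dlD drD) S \<and>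
        dialg_hom scD S (plus_dl scD dlD drD) (plus_dr scD dlD drD) sc V dl dr f \<and>
        f ` S = V)"

text \<open>Basis: marked words (w,p) with w a nonempty word over X and p < length w the marked
  position. Elements: finitely supported k-valued functions on marked words.
  (u,i) |- (v,j) = (u@v, length u + j),  (u,i) -| (v,j) = (u@v, i).\<close>

type_synonym ('x,'k) dias = "'x list \<times> nat \<Rightarrow> 'k"

definition dias_scale :: "'k::field \<Rightarrow> ('x,'k) dias \<Rightarrow> ('x,'k) dias" where
  "dias_scale a f = (\<lambda>m. a * f m)"

definition dias_carrier :: "'x set \<Rightarrow> ('x,'k::field) dias set" where
  "dias_carrier X = {f. finite {m. f m \<noteq> 0} \<and>
     (\<forall>w p. f (w, p) \<noteq> 0 \<longrightarrow> w \<noteq> [] \<and> set w \<subseteq> X \<and> p < length w)}"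

definition dias_dl :: "('x,'k::field) dias \<Rightarrow> ('x,'k) dias \<Rightarrow> ('x,'k) dias" where
  "dias_dl f g = (\<lambda>(w, p). \<Sum>k\<in>{1..<length w}.
      if k \<le> p then (\<Sum>i<k. f (take k w, i)) * g (drop k w, p - k) else 0)"

definition dias_dr :: "('x,'k::field) dias \<Rightarrow> ('x,'k) dias \<Rightarrow> ('x,'k) dias" where
  "dias_dr f g = (\<lambda>(w, p). \<Sum>k\<in>{1..<length w}.
      if p < k then f (take k w, p) * (\<Sum>j<length w - k. g (drop k w, j)) else 0)"

definition dias_gen :: "'x \<Rightarrow> ('x,'k::field) dias" where
  "dias_gen x = (\<lambda>m. if m = ([x], 0) then 1 else 0)"

definition DiSJ :: "'x set \<Rightarrow> ('x,'k::field) dias set" where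
  "DiSJ X = gen_subdialg dias_scale (dias_carrier X)
      (plus_dl dias_scale dias_dl dias_dr) (plus_dr dias_scale dias_dl dias_dr)
      (dias_gen ` X)"

end

theory Submission
  imports Defs
begin


lemma sum_fun_app: "(\<Sum>i\<in>A. F i) x = (\<Sum>i\<in>A. F i x)"
  by (induction A rule: infinite_finite_induct) auto

lemma dias_module: "module (dias_scale :: 'k::field \<Rightarrow> ('x,'k) dias \<Rightarrow> _)"
  by unfold_locales (auto simp: dias_scale_def algebra_simps)

lemma dl_add1: "dias_dl (f + f') g = dias_dl f g + dias_dl f' g"
  apply (rule ext, clarify)
  apply (simp only: dias_dl_def split_conv plus_fun_apply)
  apply (subst sum.distrib[symmetric])
  apply (rule sum.cong, rule refl)
  apply (simp add: sum.distrib ring_distribs)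
  done

lemma dl_add2: "dias_dl f (g + g') = dias_dl f g + dias_dl f g'"
  apply (rule ext, clarify)
  apply (simp only: dias_dl_def split_conv plus_fun_apply)
  apply (subst sum.distrib[symmetric])
  apply (rule sum.cong, rule refl)
  apply (simp add: sum.distrib ring_distribs)
  done

lemma dr_add1: "dias_dr (f + f') g = dias_dr f g + dias_dr f' g"
  apply (rule ext, clarify)
  apply (simp only: dias_dr_def split_conv plus_fun_apply)
  apply (subst sum.distrib[symmetric])
  apply (rule sum.cong, rule refl)
  apply (simp add: sum.distrib ring_distribs)
  done

lemma dr_add2: "dias_dr f (g + g') = dias_dr f g + dias_dr f g'"
  apply (rule ext, clarify)
  apply (simp only: dias_dr_def split_conv plus_fun_apply)
  apply (subst sum.distrib[symmetric])
  apply (rule sum.cong, rule refl)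
  apply (simp add: sum.distrib ring_distribs)
  done

lemma dl_sc1: "dias_dl (dias_scale a f) g = dias_scale a (dias_dl f g)"
  by (auto simp: dias_dl_def dias_scale_def fun_eq_iff sum_distrib_left algebra_simps intro!: sum.cong)
lemma dl_sc2: "dias_dl f (dias_scale a g) = dias_scale a (dias_dl f g)"
  by (auto simp: dias_dl_def dias_scale_def fun_eq_iff sum_distrib_left algebra_simps intro!: sum.cong)
lemma dr_sc1: "dias_dr (dias_scale a f) g = dias_scale a (dias_dr f g)"
  by (auto simp: dias_dr_def dias_scale_def fun_eq_iff sum_distrib_left algebra_simps intro!: sum.cong)
lemma dr_sc2: "dias_dr f (dias_scale a g) = dias_scale a (dias_dr f g)"
  by (auto simp: dias_dr_def dias_scale_def fun_eq_iff sum_distrib_left algebra_simps intro!: sum.cong)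

lemma tdl: "k < length w \<Longrightarrow> (take k w = u \<and> drop k w = v) \<longleftrightarrow> (w = u @ v \<and> k = length u)"
proof
  assume k: "k < length w" and h: "take k w = u \<and> drop k w = v"
  then have "w = u @ v" by (metis append_take_drop_id)
  moreover have "length u = k" using h k by auto
  ultimately show "w = u @ v \<and> k = length u" by simp
next
  assume "w = u @ v \<and> k = length u"
  then show "take k w = u \<and> drop k w = v" by simp
qed

definition dlt :: "'x list \<times> nat \<Rightarrow> ('x,'k::field) dias" where
  "dlt m = (\<lambda>m'. if m' = m then 1 else 0)"

lemma dl_delta:
  assumes "u \<noteq> []" "v \<noteq> []" "i < length u"
  shows "dias_dl (dlt (u,i)) (dlt (v,j)) = (dlt (u @ v, length u + j) :: ('x,'k::field) dias)"
proof (rule ext, clarify)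
  fix w p
  have "dias_dl (dlt (u,i)) (dlt (v,j)) (w,p) = (\<Sum>k\<in>{1..<length w}.
     if k = length u then (if w = u @ v \<and> p = length u + j then (1::'k) else 0) else 0)"
    unfolding dias_dl_def split_conv
  proof (intro sum.cong refl)
    fix k assume k: "k \<in> {1..<length w}"
    have s: "(\<Sum>ia<k. dlt (u, i) (take k w, ia)) = (if take k w = u \<and> i < k then (1::'k) else 0)"
      unfolding dlt_def by (cases "take k w = u") simp_all
    show "(if k \<le> p then (\<Sum>ia<k. dlt (u, i) (take k w, ia)) * dlt (v, j) (drop k w, p - k) else 0) =
          (if k = length u then if w = u @ v \<and> p = length u + j then (1::'k) else 0 else 0)"
    proof (cases "take k w = u \<and> drop k w = v")
      case True
      then have "w = u @ v" "k = length u" using tdl[of k w u v] k by auto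
      then show ?thesis unfolding s using assms by (auto simp: dlt_def)
    next
      case False
      then have "\<not> (k = length u \<and> w = u @ v)" using tdl[of k w u v] k by auto
      then show ?thesis unfolding s using False by (auto simp: dlt_def)
    qed
  qed
  also have "\<dots> = dlt (u @ v, length u + j) (w,p)"
    using assms by (auto simp: dlt_def)
  finally show "dias_dl (dlt (u,i)) (dlt (v,j)) (w,p) = (dlt (u @ v, length u + j) :: ('x,'k) dias) (w,p)" .
qed

lemma dr_delta:
  assumes "u \<noteq> []" "v \<noteq> []" "i < length u" "j < length v"
  shows "dias_dr (dlt (u,i)) (dlt (v,j)) = (dlt (u @ v, i) :: ('x,'k::field) dias)"
proof (rule ext, clarify)
  fix w p
  have "dias_dr (dlt (u,i)) (dlt (v,j)) (w,p) = (\<Sum>k\<in>{1..<length w}.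
     if k = length u then (if w = u @ v \<and> p = i then (1::'k) else 0) else 0)"
    unfolding dias_dr_def split_conv
  proof (intro sum.cong refl)
    fix k assume k: "k \<in> {1..<length w}"
    have s: "(\<Sum>ja<length w - k. dlt (v, j) (drop k w, ja)) = (if drop k w = v \<and> j < length w - k then (1::'k) else 0)"
      unfolding dlt_def by (cases "drop k w = v") simp_all
    show "(if p < k then dlt (u, i) (take k w, p) * (\<Sum>ja<length w - k. dlt (v, j) (drop k w, ja)) else 0) =
          (if k = length u then if w = u @ v \<and> p = i then (1::'k) else 0 else 0)"
    proof (cases "take k w = u \<and> drop k w = v")
      case True
      then have "w = u @ v" "k = length u" using tdl[of k w u v] k by auto
      then show ?thesis unfolding s using assms by (auto simp: dlt_def)
    next
      case False
      then have "\<not> (k = length u \<and> w = u @ v)" using tdl[of k w u v] k by auto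
      then show ?thesis unfolding s using False by (auto simp: dlt_def)
    qed
  qed
  also have "\<dots> = dlt (u @ v, i) (w,p)"
    using assms by (auto simp: dlt_def)
  finally show "dias_dr (dlt (u,i)) (dlt (v,j)) (w,p) = (dlt (u @ v, i) :: ('x,'k) dias) (w,p)" .
qed




definition supp :: "('x,'k::field) dias \<Rightarrow> ('x list \<times> nat) set" where
  "supp f = {m. f m \<noteq> 0}"

definition vld :: "'x list \<times> nat \<Rightarrow> bool" where
  "vld m \<longleftrightarrow> fst m \<noteq> [] \<and> snd m < length (fst m)"

lemma expand: "finite (supp f) \<Longrightarrow> f = (\<Sum>m\<in>supp f. dias_scale (f m) (dlt m))"
proof (rule ext)
  fix x assume fin: "finite (supp f)"
  have "(\<Sum>m\<in>supp f. dias_scale (f m) (dlt m)) x = (\<Sum>m\<in>supp f. if m = x then f m else 0)"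
    by (simp add: sum_fun_app dias_scale_def dlt_def) (rule sum.cong, auto)
  also have "\<dots> = f x" using fin by (simp add: sum.delta' supp_def)
  finally show "f x = (\<Sum>m\<in>supp f. dias_scale (f m) (dlt m)) x" by simp
qed

lemma lin_sum:
  fixes L :: "'a::comm_monoid_add \<Rightarrow> 'b::ab_group_add"
  assumes "\<And>f g. L (f + g) = L f + L g"
  shows "L (\<Sum>i\<in>A. F i) = (\<Sum>i\<in>A. L (F i))"
proof -
  have z: "L 0 = 0" using assms[of 0 0] by simp
  show ?thesis by (induction A rule: infinite_finite_induct) (auto simp: z assms)
qed

lemma lin_ext:
  fixes L R :: "('x,'k::field) dias \<Rightarrow> ('y,'k) dias"
  assumes "\<And>f g. L (f + g) = L f + L g" "\<And>a f. L (dias_scale a f) = dias_scale a (L f)"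
    "\<And>f g. R (f + g) = R f + R g" "\<And>a f. R (dias_scale a f) = dias_scale a (R f)"
    "finite (supp h)" "\<And>m. m \<in> supp h \<Longrightarrow> L (dlt m) = R (dlt m)"
  shows "L h = R h"
proof -
  have "L h = L (\<Sum>m\<in>supp h. dias_scale (h m) (dlt m))" using expand[OF assms(5)] by simp
  also have "\<dots> = (\<Sum>m\<in>supp h. dias_scale (h m) (L (dlt m)))"
    by (simp add: lin_sum[of L, OF assms(1)] assms(2))
  also have "\<dots> = (\<Sum>m\<in>supp h. dias_scale (h m) (R (dlt m)))"
    using assms(6) by simp
  also have "\<dots> = R (\<Sum>m\<in>supp h. dias_scale (h m) (dlt m))"
    by (simp add: lin_sum[of R, OF assms(3)] assms(4))
  also have "\<dots> = R h" using expand[OF assms(5)] by simp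
  finally show ?thesis .
qed

definition trilin :: "(('x,'k::field) dias \<Rightarrow> ('x,'k) dias \<Rightarrow> ('x,'k) dias \<Rightarrow> ('x,'k) dias) \<Rightarrow> bool" where
  "trilin T \<longleftrightarrow> (\<forall>x x' y z. T (x + x') y z = T x y z + T x' y z) \<and>
     (\<forall>a x y z. T (dias_scale a x) y z = dias_scale a (T x y z)) \<and>
     (\<forall>x y y' z. T x (y + y') z = T x y z + T x y' z) \<and>
     (\<forall>a x y z. T x (dias_scale a y) z = dias_scale a (T x y z)) \<and>
     (\<forall>x y z z'. T x y (z + z') = T x y z + T x y z') \<and>
     (\<forall>a x y z. T x y (dias_scale a z) = dias_scale a (T x y z))"

lemma tri_ext:
  assumes "trilin T1" "trilin T2"
    "\<And>m n q. vld m \<Longrightarrow> vld n \<Longrightarrow> vld q \<Longrightarrow> T1 (dlt m) (dlt n) (dlt q) = T2 (dlt m) (dlt n) (dlt q)"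
    "finite (supp x)" "\<forall>m\<in>supp x. vld m"
    "finite (supp y)" "\<forall>m\<in>supp y. vld m"
    "finite (supp z)" "\<forall>m\<in>supp z. vld m"
  shows "T1 x y z = T2 x y z"
proof -
  have s3: "T1 (dlt m) (dlt n) z = T2 (dlt m) (dlt n) z" if "vld m" "vld n" for m n
    by (rule lin_ext[of "T1 (dlt m) (dlt n)" "T2 (dlt m) (dlt n)"])
       (use assms(1,2) in \<open>auto simp: trilin_def intro: assms(3) that assms(8) dest: bspec[OF assms(9)]\<close>)
  have s2: "T1 (dlt m) y z = T2 (dlt m) y z" if "vld m" for m
    by (rule lin_ext[of "\<lambda>y. T1 (dlt m) y z" "\<lambda>y. T2 (dlt m) y z"])
       (use assms(1,2) in \<open>auto simp: trilin_def intro: s3 that assms(6) dest: bspec[OF assms(7)]\<close>)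
  show ?thesis
    by (rule lin_ext[of "\<lambda>x. T1 x y z" "\<lambda>x. T2 x y z"])
       (use assms(1,2) in \<open>auto simp: trilin_def intro: s2 assms(4) dest: bspec[OF assms(5)]\<close>)
qed

lemma vld_split: "vld m \<longleftrightarrow> (\<exists>u i. m = (u,i) \<and> u \<noteq> [] \<and> i < length u)"
  by (cases m) (auto simp: vld_def)

lemma assoc_dias:
  assumes "finite (supp x)" "\<forall>m\<in>supp x. vld m"
    "finite (supp y)" "\<forall>m\<in>supp y. vld m"
    "finite (supp z)" "\<forall>m\<in>supp z. vld m"
  shows "dias_dl (dias_dr x y) z = dias_dl (dias_dl x y) z \<and>
        dias_dr x (dias_dl y z) = dias_dr x (dias_dr y z) \<and>
        dias_dl (dias_dl x y) z = dias_dl x (dias_dl y z) \<and>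
        dias_dr (dias_dr x y) z = dias_dr x (dias_dr y z) \<and>
        dias_dr (dias_dl x y) z = dias_dl x (dias_dr y z)"
proof -
  note L = dl_add1 dl_add2 dr_add1 dr_add2 dl_sc1 dl_sc2 dr_sc1 dr_sc2
  note E = tri_ext[OF _ _ _ assms]
  show ?thesis
    apply (intro conjI)
    apply (rule E[of "\<lambda>x y z. dias_dl (dias_dr x y) z" "\<lambda>x y z. dias_dl (dias_dl x y) z"])
    apply (auto simp: trilin_def L vld_split dl_delta dr_delta add.assoc)[3]
    apply (rule E[of "\<lambda>x y z. dias_dr x (dias_dl y z)" "\<lambda>x y z. dias_dr x (dias_dr y z)"])
    apply (auto simp: trilin_def L vld_split dl_delta dr_delta add.assoc)[3]
    apply (rule E[of "\<lambda>x y z. dias_dl (dias_dl x y) z" "\<lambda>x y z. dias_dl x (dias_dl y z)"])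
    apply (auto simp: trilin_def L vld_split dl_delta dr_delta add.assoc)[3]
    apply (rule E[of "\<lambda>x y z. dias_dr (dias_dr x y) z" "\<lambda>x y z. dias_dr x (dias_dr y z)"])
    apply (auto simp: trilin_def L vld_split dl_delta dr_delta add.assoc)[3]
    apply (rule E[of "\<lambda>x y z. dias_dr (dias_dl x y) z" "\<lambda>x y z. dias_dl x (dias_dr y z)"])
    apply (auto simp: trilin_def L vld_split dl_delta dr_delta add.assoc)[3]
    done
qed




lemma carr_iff: "f \<in> dias_carrier X \<longleftrightarrow> finite (supp f) \<and> (\<forall>m\<in>supp f. vld m \<and> set (fst m) \<subseteq> X)"
  by (auto simp: dias_carrier_def supp_def vld_def)

lemma carr_zero: "0 \<in> dias_carrier X"
  by (simp add: carr_iff supp_def)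

lemma supp_add: "supp (f + g) \<subseteq> supp f \<union> supp g"
  by (auto simp: supp_def)

lemma carr_add: "f \<in> dias_carrier X \<Longrightarrow> g \<in> dias_carrier X \<Longrightarrow> f + g \<in> dias_carrier X"
  unfolding carr_iff using supp_add[of f g] by (auto intro: finite_subset)

lemma carr_scale: "f \<in> dias_carrier X \<Longrightarrow> dias_scale a f \<in> dias_carrier X"
  unfolding carr_iff by (auto simp: supp_def dias_scale_def intro: finite_subset)

lemma carr_sum: "(\<And>i. i \<in> A \<Longrightarrow> F i \<in> dias_carrier X) \<Longrightarrow> (\<Sum>i\<in>A. F i) \<in> dias_carrier X"
  by (induction A rule: infinite_finite_induct) (auto simp: carr_zero carr_add)

lemma supp_dlt: "supp (dlt m :: ('x,'k::field) dias) = {m}"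
  by (auto simp: supp_def dlt_def)

lemma carr_dlt: "vld m \<Longrightarrow> set (fst m) \<subseteq> X \<Longrightarrow> (dlt m :: ('x,'k::field) dias) \<in> dias_carrier X"
  by (simp add: carr_iff supp_dlt)

lemma expand2:
  fixes B :: "('x,'k::field) dias \<Rightarrow> ('x,'k) dias \<Rightarrow> ('x,'k) dias"
  assumes "\<And>f f' g. B (f + f') g = B f g + B f' g" "\<And>a f g. B (dias_scale a f) g = dias_scale a (B f g)"
    "\<And>f g g'. B f (g + g') = B f g + B f g'" "\<And>a f g. B f (dias_scale a g) = dias_scale a (B f g)"
    "finite (supp f)" "finite (supp g)"
  shows "B f g = (\<Sum>m\<in>supp f. dias_scale (f m) (\<Sum>n\<in>supp g. dias_scale (g n) (B (dlt m) (dlt n))))"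
proof -
  have "B f g = B (\<Sum>m\<in>supp f. dias_scale (f m) (dlt m)) g" using expand[OF assms(5)] by simp
  also have "\<dots> = (\<Sum>m\<in>supp f. dias_scale (f m) (B (dlt m) g))"
    by (simp add: lin_sum[of "\<lambda>f. B f g", OF assms(1)] assms(2))
  also have "\<dots> = (\<Sum>m\<in>supp f. dias_scale (f m) (B (dlt m) (\<Sum>n\<in>supp g. dias_scale (g n) (dlt n))))"
    using expand[OF assms(6)] by simp
  also have "\<dots> = (\<Sum>m\<in>supp f. dias_scale (f m) (\<Sum>n\<in>supp g. dias_scale (g n) (B (dlt m) (dlt n))))"
    by (simp add: lin_sum[of "\<lambda>g. B _ g", OF assms(3)] assms(4))
  finally show ?thesis .
qed

lemma dl_dlt_carr: "vld m \<Longrightarrow> set (fst m) \<subseteq> X \<Longrightarrow> vld n \<Longrightarrow> set (fst n) \<subseteq> X \<Longrightarrow>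
   (dias_dl (dlt m) (dlt n) :: ('x,'k::field) dias) \<in> dias_carrier X \<and> dias_dr (dlt m) (dlt n) \<in> dias_carrier X"
  by (cases m; cases n) (auto simp: dl_delta dr_delta vld_def intro!: carr_dlt)

lemma carr_dl: assumes "f \<in> dias_carrier X" "g \<in> dias_carrier X" shows "dias_dl f g \<in> dias_carrier X"
proof -
  have h: "finite (supp f)" "finite (supp g)" "\<forall>m\<in>supp f. vld m \<and> set (fst m) \<subseteq> X" "\<forall>m\<in>supp g. vld m \<and> set (fst m) \<subseteq> X"
    using assms by (auto simp: carr_iff)
  show ?thesis
    apply (subst expand2[of dias_dl], (simp_all add: dl_add1 dl_add2 dl_sc1 dl_sc2 h)[6])
    apply (intro carr_sum carr_scale)
    using h by (auto simp: dl_dlt_carr)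
qed

lemma carr_dr: assumes "f \<in> dias_carrier X" "g \<in> dias_carrier X" shows "dias_dr f g \<in> dias_carrier X"
proof -
  have h: "finite (supp f)" "finite (supp g)" "\<forall>m\<in>supp f. vld m \<and> set (fst m) \<subseteq> X" "\<forall>m\<in>supp g. vld m \<and> set (fst m) \<subseteq> X"
    using assms by (auto simp: carr_iff)
  show ?thesis
    apply (subst expand2[of dias_dr], (simp_all add: dr_add1 dr_add2 dr_sc1 dr_sc2 h)[6])
    apply (intro carr_sum carr_scale)
    using h by (auto simp: dl_dlt_carr)
qed




abbreviation "PL \<equiv> plus_dl dias_scale dias_dl dias_dr"
abbreviation "PR \<equiv> plus_dr dias_scale dias_dl dias_dr"

lemma PL_add1: "PL (x + y) z = PL x z + PL y z"
  by (simp add: plus_dl_def dl_add1 dr_add2 module.scale_right_distrib[OF dias_module] module.scale_scale[OF dias_module] add_ac mult.commute)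
lemma PL_add2: "PL x (y + z) = PL x y + PL x z"
  by (simp add: plus_dl_def dl_add2 dr_add1 module.scale_right_distrib[OF dias_module] module.scale_scale[OF dias_module] add_ac mult.commute)
lemma PR_add1: "PR (x + y) z = PR x z + PR y z"
  by (simp add: plus_dr_def dr_add1 dl_add2 module.scale_right_distrib[OF dias_module] module.scale_scale[OF dias_module] add_ac mult.commute)
lemma PR_add2: "PR x (y + z) = PR x y + PR x z"
  by (simp add: plus_dr_def dr_add2 dl_add1 module.scale_right_distrib[OF dias_module] module.scale_scale[OF dias_module] add_ac mult.commute)
lemma PL_sc1: "PL (dias_scale a x) y = dias_scale a (PL x y)"
  by (simp add: plus_dl_def dl_sc1 dr_sc2 module.scale_right_distrib[OF dias_module] module.scale_scale[OF dias_module] add_ac mult.commute)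
lemma PL_sc2: "PL x (dias_scale a y) = dias_scale a (PL x y)"
  by (simp add: plus_dl_def dl_sc2 dr_sc1 module.scale_right_distrib[OF dias_module] module.scale_scale[OF dias_module] add_ac mult.commute)
lemma PR_sc1: "PR (dias_scale a x) y = dias_scale a (PR x y)"
  by (simp add: plus_dr_def dr_sc1 dl_sc2 module.scale_right_distrib[OF dias_module] module.scale_scale[OF dias_module] add_ac mult.commute)
lemma PR_sc2: "PR x (dias_scale a y) = dias_scale a (PR x y)"
  by (simp add: plus_dr_def dr_sc2 dl_sc1 module.scale_right_distrib[OF dias_module] module.scale_scale[OF dias_module] add_ac mult.commute)

lemma carr_PL: "x \<in> dias_carrier X \<Longrightarrow> y \<in> dias_carrier X \<Longrightarrow> PL x y \<in> dias_carrier X"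
  by (simp add: plus_dl_def carr_scale carr_add carr_dl carr_dr)
lemma carr_PR: "x \<in> dias_carrier X \<Longrightarrow> y \<in> dias_carrier X \<Longrightarrow> PR x y \<in> dias_carrier X"
  by (simp add: plus_dr_def carr_scale carr_add carr_dl carr_dr)

lemma gen_sub: assumes "subdialg sc V dl dr V" "A \<subseteq> V" shows "subdialg sc V dl dr (gen_subdialg sc V dl dr A)"
proof -
  let ?F = "{S. A \<subseteq> S \<and> subdialg sc V dl dr S}"
  have V: "V \<in> ?F" using assms by simp
  have 1: "\<Inter>?F \<subseteq> V" using V by blast
  have 2: "0 \<in> \<Inter>?F" by (auto simp: subdialg_def subspc_def)
  have 3: "x + y \<in> \<Inter>?F" if "x \<in> \<Inter>?F" "y \<in> \<Inter>?F" for x y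
    using that by (auto simp: subdialg_def subspc_def)
  have 4: "sc a x \<in> \<Inter>?F" if "x \<in> \<Inter>?F" for a x
    using that by (auto simp: subdialg_def subspc_def)
  have 5: "dl x y \<in> \<Inter>?F \<and> dr x y \<in> \<Inter>?F" if "x \<in> \<Inter>?F" "y \<in> \<Inter>?F" for x y
    using that by (auto simp: subdialg_def)
  have "subdialg sc V dl dr (\<Inter>?F)"
    unfolding subdialg_def[of sc V dl dr "\<Inter>?F"] subspc_def[of sc "\<Inter>?F"]
    using 1 2 3 4 5 by (intro conjI ballI allI) auto
  then show ?thesis unfolding gen_subdialg_def .
qed

lemma gen_least: "subdialg sc V dl dr T \<Longrightarrow> A \<subseteq> T \<Longrightarrow> gen_subdialg sc V dl dr A \<subseteq> T"
  unfolding gen_subdialg_def by blast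

lemma gen_incl: "A \<subseteq> gen_subdialg sc V dl dr A"
  unfolding gen_subdialg_def by blast

lemma carr_sub: "subdialg dias_scale (dias_carrier X) PL PR (dias_carrier X)"
  by (simp add: subdialg_def subspc_def carr_zero carr_add carr_scale carr_PL carr_PR)

lemma gens_carr: "(dias_gen ` X :: ('x,'k::field) dias set) \<subseteq> dias_carrier X"
proof -
  have "dias_gen x = (dlt ([x],0) :: ('x,'k) dias)" for x by (simp add: dias_gen_def dlt_def fun_eq_iff)
  then show ?thesis by (auto intro!: carr_dlt simp: vld_def)
qed

lemma DiSJ_sub: "subdialg dias_scale (dias_carrier X) PL PR (DiSJ X :: ('x,'k::field) dias set)"
  unfolding DiSJ_def by (rule gen_sub[OF carr_sub gens_carr])

lemma dialg_carr: "dialg dias_scale (dias_carrier X) dias_dl dias_dr"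
  by (simp add: dialg_def dias_module subspc_def carr_zero carr_add carr_scale carr_dl carr_dr
      dl_add1 dl_add2 dr_add1 dr_add2 dl_sc1 dl_sc2 dr_sc1 dr_sc2)

lemma assoc_carr: "assoc_dialg dias_scale (dias_carrier (X::'x set)) dias_dl (dias_dr :: ('x,'k::field) dias \<Rightarrow> _)"
proof -
  have A: "\<forall>x\<in>dias_carrier X. \<forall>y\<in>dias_carrier X. \<forall>z\<in>dias_carrier X.
        dias_dl (dias_dr x y) z = dias_dl (dias_dl x y) z \<and>
        dias_dr x (dias_dl y z) = dias_dr x (dias_dr y z) \<and>
        dias_dl (dias_dl x y) z = dias_dl x (dias_dl y z) \<and>
        dias_dr (dias_dr x y) z = dias_dr x (dias_dr y z) \<and>
        dias_dr (dias_dl x y) z = dias_dl x (dias_dr y (z :: ('x,'k) dias))"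
  proof (intro ballI)
    fix x y z :: "('x,'k) dias" assume "x \<in> dias_carrier X" "y \<in> dias_carrier X" "z \<in> dias_carrier X"
    then show "dias_dl (dias_dr x y) z = dias_dl (dias_dl x y) z \<and>
        dias_dr x (dias_dl y z) = dias_dr x (dias_dr y z) \<and>
        dias_dl (dias_dl x y) z = dias_dl x (dias_dl y z) \<and>
        dias_dr (dias_dr x y) z = dias_dr x (dias_dr y z) \<and>
        dias_dr (dias_dl x y) z = dias_dl x (dias_dr y z)"
      by (intro assoc_dias) (auto simp: carr_iff)
  qed
  show ?thesis unfolding assoc_dialg_def using dialg_carr A by (rule conjI)
qed

lemma part1: "HomDiSJ_via TYPE(('x,'k) dias) (dias_scale :: 'k::field \<Rightarrow> _) (DiSJ (X::'x set)) PL PR"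
proof -
  have S: "subdialg dias_scale (dias_carrier X) PL PR (DiSJ X :: ('x,'k) dias set)" by (rule DiSJ_sub)
  have "dialg dias_scale (DiSJ X :: ('x,'k) dias set) PL PR"
    using S by (simp add: dialg_def subdialg_def dias_module PL_add1 PL_add2 PR_add1 PR_add2 PL_sc1 PL_sc2 PR_sc1 PR_sc2)
  moreover have "dialg_hom dias_scale (DiSJ X) PL PR dias_scale (DiSJ X :: ('x,'k) dias set) PL PR id"
    by (simp add: dialg_hom_def)
  ultimately show ?thesis unfolding HomDiSJ_via_def
    using assoc_carr S by (intro conjI exI[of _ dias_scale] exI[of _ "dias_carrier X"] exI[of _ dias_dl] exI[of _ dias_dr]
      exI[of _ "DiSJ X"] exI[of _ id]) auto
qed




fun ev :: "('x \<Rightarrow> 'd) \<Rightarrow> ('d \<Rightarrow> 'd \<Rightarrow> 'd) \<Rightarrow> ('d \<Rightarrow> 'd \<Rightarrow> 'd) \<Rightarrow> 'x list \<Rightarrow> nat \<Rightarrow> 'd::zero" where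
  "ev s dl dr [] p = 0"
| "ev s dl dr [a] p = s a"
| "ev s dl dr (a # b # w) 0 = dr (s a) (ev s dl dr (b # w) 0)"
| "ev s dl dr (a # b # w) (Suc p) = dl (s a) (ev s dl dr (b # w) p)"

locale ADL =
  fixes scD :: "'k::field \<Rightarrow> 'd::ab_group_add \<Rightarrow> 'd" and D :: "'d set"
    and dlD drD :: "'d \<Rightarrow> 'd \<Rightarrow> 'd" and s :: "'x \<Rightarrow> 'd"
  assumes adl: "assoc_dialg scD D dlD drD" and sD: "\<And>x. s x \<in> D"
begin

abbreviation "E \<equiv> ev s dlD drD"

lemma md: "module scD" using adl by (simp add: assoc_dialg_def dialg_def)

lemma D0: "0 \<in> D" using adl by (simp add: assoc_dialg_def dialg_def subspc_def)
lemma Dadd: "x \<in> D \<Longrightarrow> y \<in> D \<Longrightarrow> x + y \<in> D" using adl by (simp add: assoc_dialg_def dialg_def subspc_def)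
lemma Dsc: "x \<in> D \<Longrightarrow> scD a x \<in> D" using adl by (simp add: assoc_dialg_def dialg_def subspc_def)
lemma Dl: "x \<in> D \<Longrightarrow> y \<in> D \<Longrightarrow> dlD x y \<in> D" using adl by (simp add: assoc_dialg_def dialg_def)
lemma Dr: "x \<in> D \<Longrightarrow> y \<in> D \<Longrightarrow> drD x y \<in> D" using adl by (simp add: assoc_dialg_def dialg_def)
lemma bil: "x \<in> D \<Longrightarrow> y \<in> D \<Longrightarrow> z \<in> D \<Longrightarrow>
        dlD (x + y) z = dlD x z + dlD y z \<and> dlD x (y + z) = dlD x y + dlD x z \<and>
        drD (x + y) z = drD x z + drD y z \<and> drD x (y + z) = drD x y + drD x z"
  using adl by (simp add: assoc_dialg_def dialg_def)
lemma bsc: "x \<in> D \<Longrightarrow> y \<in> D \<Longrightarrow>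
        dlD (scD a x) y = scD a (dlD x y) \<and> dlD x (scD a y) = scD a (dlD x y) \<and>
        drD (scD a x) y = scD a (drD x y) \<and> drD x (scD a y) = scD a (drD x y)"
  using adl by (simp add: assoc_dialg_def dialg_def)
lemma ax: "x \<in> D \<Longrightarrow> y \<in> D \<Longrightarrow> z \<in> D \<Longrightarrow>
        dlD (drD x y) z = dlD (dlD x y) z \<and>
        drD x (dlD y z) = drD x (drD y z) \<and>
        dlD (dlD x y) z = dlD x (dlD y z) \<and>
        drD (drD x y) z = drD x (drD y z) \<and>
        drD (dlD x y) z = dlD x (drD y z)"
  using adl by (simp add: assoc_dialg_def)

lemma Dsum: "(\<And>i. i \<in> A \<Longrightarrow> F i \<in> D) \<Longrightarrow> (\<Sum>i\<in>A. F i) \<in> D"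
  by (induction A rule: infinite_finite_induct) (auto simp: D0 Dadd)

lemma E_in: "E w p \<in> D"
proof (induction w arbitrary: p)
  case Nil then show ?case by (simp add: D0)
next
  case (Cons a w) then show ?case by (cases w; cases p) (auto simp: sD Dl Dr)
qed

lemma E_R: "x \<in> D \<Longrightarrow> drD x (E v j) = drD x (E v 0)"
proof (induction v arbitrary: x j)
  case Nil then show ?case by simp
next
  case (Cons b v)
  show ?case
  proof (cases v)
    case Nil then show ?thesis by simp
  next
    case (Cons c w)
    show ?thesis
    proof (cases j)
      case 0 then show ?thesis by simp
    next
      case (Suc j')
      have "drD x (E (b # v) j) = drD x (dlD (s b) (E v j'))" using Cons Suc by simp
      also have "\<dots> = drD (drD x (s b)) (E v j')"
        using ax[OF Cons.prems sD E_in] ax[OF Cons.prems sD E_in] by simp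
      also have "\<dots> = drD (drD x (s b)) (E v 0)" by (rule Cons.IH) (simp add: Dr Cons.prems sD)
      also have "\<dots> = drD x (drD (s b) (E v 0))" using ax[OF Cons.prems sD E_in] by simp
      also have "\<dots> = drD x (E (b # v) 0)" using Cons by simp
      finally show ?thesis .
    qed
  qed
qed

lemma E_L: "x \<in> D \<Longrightarrow> dlD (E u i) x = dlD (E u 0) x"
proof (induction u arbitrary: i)
  case Nil then show ?case by simp
next
  case (Cons a u)
  show ?case
  proof (cases u)
    case Nil then show ?thesis by simp
  next
    case (Cons b w)
    show ?thesis
    proof (cases i)
      case 0 then show ?thesis by simp
    next
      case (Suc i')
      have "dlD (E (a # u) i) x = dlD (dlD (s a) (E u i')) x" using Cons Suc by simp
      also have "\<dots> = dlD (s a) (dlD (E u i') x)" using ax[OF sD E_in Cons.prems] by simp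
      also have "\<dots> = dlD (s a) (dlD (E u 0) x)" by (metis Cons.IH Cons.prems)
      also have "\<dots> = dlD (drD (s a) (E u 0)) x" using ax[OF sD E_in Cons.prems] by simp
      also have "\<dots> = dlD (E (a # u) 0) x" using Cons by simp
      finally show ?thesis .
    qed
  qed
qed

lemma E_app_r: "u \<noteq> [] \<Longrightarrow> v \<noteq> [] \<Longrightarrow> i < length u \<Longrightarrow> E (u @ v) i = drD (E u i) (E v j)"
proof (induction u arbitrary: i)
  case Nil then show ?case by simp
next
  case (Cons a u)
  obtain c v' where v: "v = c # v'" using Cons.prems by (cases v) auto
  show ?case
  proof (cases u)
    case Nil
    then have "i = 0" using Cons.prems by simp
    then show ?thesis using Nil v E_R[OF sD, of a v j] by simp
  next
    case (Cons b w)
    show ?thesis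
    proof (cases i)
      case 0
      have "E ((a # u) @ v) i = drD (s a) (E (u @ v) 0)" using Cons 0 by simp
      also have "\<dots> = drD (s a) (drD (E u 0) (E v j))" using Cons.IH[of 0] Cons Cons.prems by simp
      also have "\<dots> = drD (drD (s a) (E u 0)) (E v j)" using ax[OF sD E_in E_in] by simp
      also have "\<dots> = drD (E (a # u) i) (E v j)" using Cons 0 by simp
      finally show ?thesis .
    next
      case (Suc i')
      have "E ((a # u) @ v) i = dlD (s a) (E (u @ v) i')" using Cons Suc by simp
      also have "\<dots> = dlD (s a) (drD (E u i') (E v j))" using Cons.IH[of i'] Cons Suc Cons.prems by simp
      also have "\<dots> = drD (dlD (s a) (E u i')) (E v j)" using ax[OF sD E_in E_in] by simp
      also have "\<dots> = drD (E (a # u) i) (E v j)" using Cons Suc by simp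
      finally show ?thesis .
    qed
  qed
qed

lemma E_app_l: "u \<noteq> [] \<Longrightarrow> v \<noteq> [] \<Longrightarrow> E (u @ v) (length u + j) = dlD (E u i) (E v j)"
proof (induction u arbitrary: i)
  case Nil then show ?case by simp
next
  case (Cons a u)
  obtain c v' where v: "v = c # v'" using Cons.prems by (cases v) auto
  show ?case
  proof (cases u)
    case Nil
    then show ?thesis using v by simp
  next
    case (Cons b w)
    have "E ((a # u) @ v) (length (a # u) + j) = dlD (s a) (E (u @ v) (length u + j))" using Cons by simp
    also have "\<dots> = dlD (s a) (dlD (E u 0) (E v j))" using Cons.IH[of 0] Cons Cons.prems by simp
    also have "\<dots> = dlD (dlD (s a) (E u 0)) (E v j)" using ax[OF sD E_in E_in] by simp
    also have "\<dots> = dlD (E (a # u) 1) (E v j)" using Cons by simp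
    also have "\<dots> = dlD (E (a # u) 0) (E v j)" using E_L[OF E_in] by blast
    also have "\<dots> = dlD (E (a # u) i) (E v j)" using E_L[OF E_in] by metis
    finally show ?thesis .
  qed
qed


definition Psi :: "('x,'k) dias \<Rightarrow> 'd" where
  "Psi g = (\<Sum>m\<in>supp g. scD (g m) (E (fst m) (snd m)))"

lemma Psi_sup: "finite A \<Longrightarrow> supp g \<subseteq> A \<Longrightarrow> Psi g = (\<Sum>m\<in>A. scD (g m) (E (fst m) (snd m)))"
  unfolding Psi_def
  by (rule sum.mono_neutral_left) (auto simp: supp_def module.scale_zero_left[OF md])

lemma Psi_in: "Psi g \<in> D"
  unfolding Psi_def by (intro Dsum Dsc E_in)

lemma Psi_add: "finite (supp f) \<Longrightarrow> finite (supp g) \<Longrightarrow> Psi (f + g) = Psi f + Psi g"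
proof -
  assume f: "finite (supp f)" and g: "finite (supp g)"
  let ?A = "supp f \<union> supp g"
  have "Psi (f + g) = (\<Sum>m\<in>?A. scD ((f + g) m) (E (fst m) (snd m)))"
    using f g supp_add[of f g] by (intro Psi_sup) auto
  also have "\<dots> = (\<Sum>m\<in>?A. scD (f m) (E (fst m) (snd m))) + (\<Sum>m\<in>?A. scD (g m) (E (fst m) (snd m)))"
    by (simp add: module.scale_left_distrib[OF md] sum.distrib)
  also have "\<dots> = Psi f + Psi g"
  proof -
    have "Psi f = (\<Sum>m\<in>?A. scD (f m) (E (fst m) (snd m)))" by (rule Psi_sup) (use f g in auto)
    moreover have "Psi g = (\<Sum>m\<in>?A. scD (g m) (E (fst m) (snd m)))" by (rule Psi_sup) (use f g in auto)
    ultimately show ?thesis by simp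
  qed
  finally show ?thesis .
qed

lemma supp_scale: "supp (dias_scale a f) \<subseteq> supp f"
  by (auto simp: supp_def dias_scale_def)

lemma Psi_scale: "finite (supp f) \<Longrightarrow> Psi (dias_scale a f) = scD a (Psi f)"
proof -
  assume f: "finite (supp f)"
  have "Psi (dias_scale a f) = (\<Sum>m\<in>supp f. scD (a * f m) (E (fst m) (snd m)))"
    using f supp_scale[of a f] by (subst Psi_sup[of "supp f"]) (auto simp: dias_scale_def)
  also have "\<dots> = scD a (Psi f)"
    by (simp add: Psi_def module.scale_sum_right[OF md] module.scale_scale[OF md])
  finally show ?thesis .
qed

lemma fin_add: "finite (supp f) \<Longrightarrow> finite (supp g) \<Longrightarrow> finite (supp (f + g))"
  using supp_add[of f g] by (auto intro: finite_subset)

lemma fin_sum: "(\<And>i. i \<in> A \<Longrightarrow> finite (supp (F i))) \<Longrightarrow> finite (supp (\<Sum>i\<in>A. F i))"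
proof (induction A rule: infinite_finite_induct)
  case (insert x A)
  have "finite (supp (F x + (\<Sum>i\<in>A. F i)))" using insert by (intro fin_add) auto
  then show ?case by (simp only: sum.insert[OF insert(1,2)])
qed (auto simp: supp_def)

lemma fin_scale: "finite (supp f) \<Longrightarrow> finite (supp (dias_scale a f))"
  using supp_scale[of a f] by (auto intro: finite_subset)

lemma Psi_zero: "Psi 0 = 0"
  by (simp add: Psi_def supp_def)

lemma Psi_sum: "(\<And>i. i \<in> A \<Longrightarrow> finite (supp (F i))) \<Longrightarrow> Psi (\<Sum>i\<in>A. F i) = (\<Sum>i\<in>A. Psi (F i))"
proof (induction A rule: infinite_finite_induct)
  case (insert x A)
  have "Psi (\<Sum>i\<in>insert x A. F i) = Psi (F x + (\<Sum>i\<in>A. F i))" by (simp only: sum.insert[OF insert(1,2)])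
  also have "\<dots> = Psi (F x) + Psi (\<Sum>i\<in>A. F i)" using insert by (intro Psi_add fin_sum) auto
  also have "Psi (\<Sum>i\<in>A. F i) = (\<Sum>i\<in>A. Psi (F i))" using insert by (intro insert.IH) auto
  finally show ?case by (simp only: sum.insert[OF insert(1,2)])
qed (auto simp: Psi_zero)

lemma Psi_dlt: "Psi (dlt m) = E (fst m) (snd m)"
  unfolding Psi_def supp_dlt by (simp add: dlt_def module.scale_one[OF md])

lemma dlD_sum1: "y \<in> D \<Longrightarrow> (\<And>i. i \<in> A \<Longrightarrow> F i \<in> D) \<Longrightarrow> dlD (\<Sum>i\<in>A. F i) y = (\<Sum>i\<in>A. dlD (F i) y)"
proof (induction A rule: infinite_finite_induct)
  case (empty)
  then show ?case using bil[OF D0 D0 empty(1)] by simp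
next
  case (insert x F) then show ?case by (simp add: bil Dsum)
qed (use bil[OF D0 D0] in simp)


lemma D_sum_lin:
  fixes G :: "'d \<Rightarrow> 'e::ab_group_add"
  assumes "\<And>a b. a \<in> D \<Longrightarrow> b \<in> D \<Longrightarrow> G (a + b) = G a + G b" "\<And>i. i \<in> A \<Longrightarrow> F i \<in> D"
  shows "G (\<Sum>i\<in>A. F i) = (\<Sum>i\<in>A. G (F i))"
proof -
  have z: "G 0 = 0" using assms(1)[OF D0 D0] by simp
  show ?thesis using assms(2)
  proof (induction A rule: infinite_finite_induct)
    case (insert x A) then show ?case by (simp add: assms(1) Dsum)
  qed (auto simp: z)
qed

fun mdl :: "'x list \<times> nat \<Rightarrow> 'x list \<times> nat \<Rightarrow> 'x list \<times> nat" where
  "mdl (u,i) (v,j) = (u @ v, length u + j)"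
fun mdr :: "'x list \<times> nat \<Rightarrow> 'x list \<times> nat \<Rightarrow> 'x list \<times> nat" where
  "mdr (u,i) (v,j) = (u @ v, i)"

lemma dl_mdl: "vld m \<Longrightarrow> vld n \<Longrightarrow> dias_dl (dlt m) (dlt n) = (dlt (mdl m n) :: ('x,'k) dias)"
  by (cases m; cases n) (simp add: vld_def dl_delta)
lemma dr_mdr: "vld m \<Longrightarrow> vld n \<Longrightarrow> dias_dr (dlt m) (dlt n) = (dlt (mdr m n) :: ('x,'k) dias)"
  by (cases m; cases n) (simp add: vld_def dr_delta)
lemma E_mdl: "vld m \<Longrightarrow> vld n \<Longrightarrow> E (fst (mdl m n)) (snd (mdl m n)) = dlD (E (fst m) (snd m)) (E (fst n) (snd n))"
  by (cases m; cases n) (simp add: vld_def E_app_l)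
lemma E_mdr: "vld m \<Longrightarrow> vld n \<Longrightarrow> E (fst (mdr m n)) (snd (mdr m n)) = drD (E (fst m) (snd m)) (E (fst n) (snd n))"
  by (cases m; cases n) (simp add: vld_def E_app_r)

lemma Psi_bil:
  fixes B :: "('x,'k) dias \<Rightarrow> ('x,'k) dias \<Rightarrow> ('x,'k) dias" and BD :: "'d \<Rightarrow> 'd \<Rightarrow> 'd"
    and mb :: "'x list \<times> nat \<Rightarrow> 'x list \<times> nat \<Rightarrow> 'x list \<times> nat"
  assumes "\<And>f f' g. B (f + f') g = B f g + B f' g" "\<And>a f g. B (dias_scale a f) g = dias_scale a (B f g)"
    "\<And>f g g'. B f (g + g') = B f g + B f g'" "\<And>a f g. B f (dias_scale a g) = dias_scale a (B f g)"
    and BDl: "\<And>x y z. x \<in> D \<Longrightarrow> y \<in> D \<Longrightarrow> z \<in> D \<Longrightarrow> BD (x + y) z = BD x z + BD y z \<and> BD x (y + z) = BD x y + BD x z"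
    and BDs: "\<And>a x y. x \<in> D \<Longrightarrow> y \<in> D \<Longrightarrow> BD (scD a x) y = scD a (BD x y) \<and> BD x (scD a y) = scD a (BD x y)"
    and BDin: "\<And>x y. x \<in> D \<Longrightarrow> y \<in> D \<Longrightarrow> BD x y \<in> D"
    and Bm: "\<And>m n. vld m \<Longrightarrow> vld n \<Longrightarrow> B (dlt m) (dlt n) = dlt (mb m n)"
    and Em: "\<And>m n. vld m \<Longrightarrow> vld n \<Longrightarrow> E (fst (mb m n)) (snd (mb m n)) = BD (E (fst m) (snd m)) (E (fst n) (snd n))"
    and f: "finite (supp f)" "\<forall>m\<in>supp f. vld m" and g: "finite (supp g)" "\<forall>m\<in>supp g. vld m"
  shows "Psi (B f g) = BD (Psi f) (Psi g)"
proof -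
  let ?E = "\<lambda>m. E (fst m) (snd m)"
  have "B f g = (\<Sum>m\<in>supp f. dias_scale (f m) (\<Sum>n\<in>supp g. dias_scale (g n) (B (dlt m) (dlt n))))"
    by (rule expand2[OF assms(1-4) f(1) g(1)])
  also have "\<dots> = (\<Sum>m\<in>supp f. dias_scale (f m) (\<Sum>n\<in>supp g. dias_scale (g n) (dlt (mb m n))))"
    using f g Bm by (intro sum.cong refl arg_cong[where f="dias_scale _"]) auto
  finally have 1: "Psi (B f g) = Psi (\<Sum>m\<in>supp f. dias_scale (f m) (\<Sum>n\<in>supp g. dias_scale (g n) (dlt (mb m n))))"
    by simp
  have fd: "finite (supp (dlt m :: ('x,'k) dias))" for m by (simp add: supp_dlt)
  have 2: "Psi (\<Sum>m\<in>supp f. dias_scale (f m) (\<Sum>n\<in>supp g. dias_scale (g n) (dlt (mb m n)))) = (\<Sum>m\<in>supp f. scD (f m) (\<Sum>n\<in>supp g. scD (g n) (?E (mb m n))))"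
    by (simp add: Psi_sum Psi_scale fin_scale fin_sum fd Psi_dlt)
  have 3: "(\<Sum>m\<in>supp f. scD (f m) (\<Sum>n\<in>supp g. scD (g n) (?E (mb m n)))) = (\<Sum>m\<in>supp f. scD (f m) (\<Sum>n\<in>supp g. scD (g n) (BD (?E m) (?E n))))"
    using f g Em by (intro sum.cong refl arg_cong[where f="scD _"]) auto
  have "BD (Psi f) (Psi g) = BD (\<Sum>m\<in>supp f. scD (f m) (?E m)) (\<Sum>n\<in>supp g. scD (g n) (?E n))"
    by (simp add: Psi_def)
  also have "\<dots> = (\<Sum>m\<in>supp f. BD (scD (f m) (?E m)) (\<Sum>n\<in>supp g. scD (g n) (?E n)))"
    by (rule D_sum_lin) (auto simp: BDl Dsum Dsc E_in)
  also have "\<dots> = (\<Sum>m\<in>supp f. scD (f m) (BD (?E m) (\<Sum>n\<in>supp g. scD (g n) (?E n))))"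
    by (simp add: BDs Dsum Dsc E_in)
  also have "\<dots> = (\<Sum>m\<in>supp f. scD (f m) (\<Sum>n\<in>supp g. BD (?E m) (scD (g n) (?E n))))"
    by (intro sum.cong refl arg_cong[where f="scD _"] D_sum_lin) (auto simp: BDl Dsc E_in)
  also have "\<dots> = (\<Sum>m\<in>supp f. scD (f m) (\<Sum>n\<in>supp g. scD (g n) (BD (?E m) (?E n))))"
    by (simp add: BDs E_in)
  finally show ?thesis using 1 2 3 by simp
qed

lemma Psi_dl: "finite (supp f) \<Longrightarrow> \<forall>m\<in>supp f. vld m \<Longrightarrow> finite (supp g) \<Longrightarrow> \<forall>m\<in>supp g. vld m \<Longrightarrow>
  Psi (dias_dl f g) = dlD (Psi f) (Psi g)"
  by (rule Psi_bil[where mb=mdl, OF dl_add1 dl_sc1 dl_add2 dl_sc2]) (auto simp: bil bsc Dl dl_mdl E_mdl)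

lemma Psi_dr: "finite (supp f) \<Longrightarrow> \<forall>m\<in>supp f. vld m \<Longrightarrow> finite (supp g) \<Longrightarrow> \<forall>m\<in>supp g. vld m \<Longrightarrow>
  Psi (dias_dr f g) = drD (Psi f) (Psi g)"
  by (rule Psi_bil[where mb=mdr, OF dr_add1 dr_sc1 dr_add2 dr_sc2]) (auto simp: bil bsc Dr dr_mdr E_mdr)

end



context ADL begin

lemma carr_fin: "g \<in> dias_carrier X \<Longrightarrow> finite (supp g) \<and> (\<forall>m\<in>supp g. vld m)"
  by (simp add: carr_iff)

lemma Psi_PL: assumes "f \<in> dias_carrier X" "g \<in> dias_carrier X"
  shows "Psi (PL f g) = plus_dl scD dlD drD (Psi f) (Psi g)"
proof -
  have c: "dias_dl f g \<in> dias_carrier X" "dias_dr g f \<in> dias_carrier X" using assms by (simp_all add: carr_dl carr_dr)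
  have "Psi (PL f g) = scD (inverse 2) (Psi (dias_dl f g) + Psi (dias_dr g f))"
    unfolding plus_dl_def using c carr_add[OF c] by (simp add: Psi_scale Psi_add carr_fin)
  also have "\<dots> = plus_dl scD dlD drD (Psi f) (Psi g)"
    unfolding plus_dl_def using assms by (simp add: Psi_dl Psi_dr carr_fin)
  finally show ?thesis .
qed

lemma Psi_PR: assumes "f \<in> dias_carrier X" "g \<in> dias_carrier X"
  shows "Psi (PR f g) = plus_dr scD dlD drD (Psi f) (Psi g)"
proof -
  have c: "dias_dr f g \<in> dias_carrier X" "dias_dl g f \<in> dias_carrier X" using assms by (simp_all add: carr_dl carr_dr)
  have "Psi (PR f g) = scD (inverse 2) (Psi (dias_dr f g) + Psi (dias_dl g f))"
    unfolding plus_dr_def using c carr_add[OF c] by (simp add: Psi_scale Psi_add carr_fin)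
  also have "\<dots> = plus_dr scD dlD drD (Psi f) (Psi g)"
    unfolding plus_dr_def using assms by (simp add: Psi_dl Psi_dr carr_fin)
  finally show ?thesis .
qed

lemma Psi_gen: "Psi (dias_gen x) = s x"
proof -
  have "dias_gen x = (dlt ([x],0) :: ('x,'k) dias)" by (simp add: dias_gen_def dlt_def fun_eq_iff)
  then show ?thesis by (simp add: Psi_dlt)
qed

end

lemma part2:
  fixes X :: "'x set" and sc :: "'k::field \<Rightarrow> 'b::ab_group_add \<Rightarrow> 'b" and phi :: "'x \<Rightarrow> 'b"
  assumes hom: "HomDiSJ_via TYPE('d::ab_group_add) sc J dl dr" and ph: "phi ` X \<subseteq> J"
  shows "\<exists>h. dialg_hom dias_scale (DiSJ X) PL PR sc J dl dr h \<and> (\<forall>x\<in>X. h (dias_gen x) = phi x)"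
proof -
  from hom obtain scD :: "'k \<Rightarrow> 'd \<Rightarrow> 'd" and D dlD drD S f where
    A: "assoc_dialg scD D dlD drD" and Sd: "subdialg scD D (plus_dl scD dlD drD) (plus_dr scD dlD drD) S"
    and H: "dialg_hom scD S (plus_dl scD dlD drD) (plus_dr scD dlD drD) sc J dl dr f" and im: "f ` S = J"
    unfolding HomDiSJ_via_def by blast
  define s where "s x = (if x \<in> X then (SOME t. t \<in> S \<and> f t = phi x) else 0)" for x
  have sS: "s x \<in> S \<and> f (s x) = phi x" if "x \<in> X" for x
  proof -
    have "\<exists>t. t \<in> S \<and> f t = phi x" using ph im that by force
    then have "(SOME t. t \<in> S \<and> f t = phi x) \<in> S \<and> f (SOME t. t \<in> S \<and> f t = phi x) = phi x"
      by (rule someI_ex)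
    then show ?thesis using that by (simp add: s_def)
  qed
  have SD: "S \<subseteq> D" and S0: "0 \<in> S" and Sadd: "\<And>x y. x \<in> S \<Longrightarrow> y \<in> S \<Longrightarrow> x + y \<in> S"
    and Ssc: "\<And>a x. x \<in> S \<Longrightarrow> scD a x \<in> S"
    and Sl: "\<And>x y. x \<in> S \<Longrightarrow> y \<in> S \<Longrightarrow> plus_dl scD dlD drD x y \<in> S \<and> plus_dr scD dlD drD x y \<in> S"
    using Sd by (auto simp: subdialg_def subspc_def)
  have D0: "0 \<in> D" using A by (simp add: assoc_dialg_def dialg_def subspc_def)
  have sD: "s x \<in> D" for x using sS SD D0 by (cases "x \<in> X") (auto simp: s_def)
  interpret ADL scD D dlD drD s using A sD by unfold_locales auto
  define T where "T = {g \<in> dias_carrier X. Psi g \<in> S}"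
  have Tsub: "subdialg dias_scale (dias_carrier X) PL PR T"
    unfolding subdialg_def subspc_def T_def
    by (auto simp: carr_zero carr_add carr_scale carr_PL carr_PR Psi_zero S0 Psi_add Psi_scale carr_fin
        Sadd Ssc Psi_PL Psi_PR Sl)
  have gT: "dias_gen ` X \<subseteq> T"
    using gens_carr[of X] sS by (auto simp: T_def Psi_gen)
  have DT: "DiSJ X \<subseteq> T" unfolding DiSJ_def by (rule gen_least[OF Tsub gT])
  have DC: "g \<in> DiSJ X \<Longrightarrow> g \<in> dias_carrier X \<and> Psi g \<in> S" for g using DT by (auto simp: T_def)
  have Hf: "\<And>x y. x \<in> S \<Longrightarrow> y \<in> S \<Longrightarrow> f (x + y) = f x + f y \<and>
        f (plus_dl scD dlD drD x y) = dl (f x) (f y) \<and> f (plus_dr scD dlD drD x y) = dr (f x) (f y)"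
    and Hs: "\<And>a x. x \<in> S \<Longrightarrow> f (scD a x) = sc a (f x)"
    using H by (auto simp: dialg_hom_def)
  have "dialg_hom dias_scale (DiSJ X) PL PR sc J dl dr (f \<circ> Psi)"
    unfolding dialg_hom_def
  proof (intro conjI ballI allI)
    show "(f \<circ> Psi) ` DiSJ X \<subseteq> J" using DC im by auto
  next
    fix x y :: "('x,'k) dias" assume x: "x \<in> DiSJ X" and y: "y \<in> DiSJ X"
    show "(f \<circ> Psi) (x + y) = (f \<circ> Psi) x + (f \<circ> Psi) y"
    proof -
      have "Psi (x + y) = Psi x + Psi y" using DC[OF x] DC[OF y] by (intro Psi_add) (simp_all add: carr_iff)
      then show ?thesis using DC[OF x] DC[OF y] by (simp add: Hf)
    qed
    show "(f \<circ> Psi) (PL x y) = dl ((f \<circ> Psi) x) ((f \<circ> Psi) y)"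
    proof -
      have "Psi (PL x y) = plus_dl scD dlD drD (Psi x) (Psi y)" using DC[OF x] DC[OF y] by (intro Psi_PL) auto
      then show ?thesis using DC[OF x] DC[OF y] Hf by simp
    qed
    show "(f \<circ> Psi) (PR x y) = dr ((f \<circ> Psi) x) ((f \<circ> Psi) y)"
    proof -
      have "Psi (PR x y) = plus_dr scD dlD drD (Psi x) (Psi y)" using DC[OF x] DC[OF y] by (intro Psi_PR) auto
      then show ?thesis using DC[OF x] DC[OF y] Hf by simp
    qed
  next
    fix a and x :: "('x,'k) dias" assume x: "x \<in> DiSJ X"
    show "(f \<circ> Psi) (dias_scale a x) = sc a ((f \<circ> Psi) x)"
    proof -
      have "Psi (dias_scale a x) = scD a (Psi x)" using DC[OF x] by (intro Psi_scale) (simp_all add: carr_iff)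
      then show ?thesis using DC[OF x] by (simp add: Hs)
    qed
  qed
  moreover have "\<forall>x\<in>X. (f \<circ> Psi) (dias_gen x) = phi x" using sS by (simp add: Psi_gen)
  ultimately show ?thesis by blast
qed


theorem mainTheorem17:
  fixes X :: "'x set"
    and dummy :: "'k::field_char_0"
  shows "HomDiSJ_via TYPE(('x,'k) dias) (dias_scale :: 'k \<Rightarrow> _) (DiSJ X)
           (plus_dl dias_scale dias_dl dias_dr) (plus_dr dias_scale dias_dl dias_dr)
       \<and> (\<forall>(sc :: 'k \<Rightarrow> 'b::ab_group_add \<Rightarrow> 'b) J dl dr (\<phi> :: 'x \<Rightarrow> 'b).
            HomDiSJ_via TYPE('d::ab_group_add) sc J dl dr \<longrightarrow> \<phi> ` X \<subseteq> J \<longrightarrow>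
            (\<exists>h. dialg_hom dias_scale (DiSJ X)
                   (plus_dl dias_scale dias_dl dias_dr) (plus_dr dias_scale dias_dl dias_dr)
                   sc J dl dr h
                 \<and> (\<forall>x\<in>X. h (dias_gen x) = \<phi> x)))"
  apply (intro conjI allI impI)
   apply (rule part1)
  apply (erule (1) part2)
  done

end
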